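(* Let $n \geq 8$ and $P \in \mathrm{PLS}(2,3;n)$. If $P$ is not completely reduced, then the $(1,2)$-row-permutation of $P$ has a cycle of length at least $3$ whose cycle type is equivalent to a sequence containing two adjacent zeros (i.e. the cycle contains two cyclically consecutive elements neither of which lies in $\{P(1,1),P(1,2),P(1,3)\}$).
   Context: $\mathrm{PLS}(2,3;n)$ denotes the set of $n\times n$ partial Latin squares on symbols $\{1,\dots,n\}$ (each cell empty or containing one symbol, no symbol repeated in a row or column) in which rows $1,2$ and columns $1,2,3$ are completely filled and all other cells are empty. The $(1,2)$-row-permutation of $P$ is the permutation $\sigma$ of $\{1,\dots,n\}$ with $\sigma(P(1,i))=P(2,i)$ for all $i$. For a cycle $(a_1\,\dots\,a_m)$ in the disjoint cycle representation of $\sigma$, its cycle type is the $0/1$ sequence of length $m$ whose $i$th entry is $1$ if $a_i \in \{P(1,1),P(1,2),P(1,3)\}$ and $0$ otherwise. Two sequences are equivalent if one is a cyclic permutation of the other; two entries of a sequence are adjacent if one immediately follows the other. $P$ is completely reduced if the cycle type of every cycle of $\sigma$ is equivalent to one of: $00$, $01$, $11$, $101$, $111$, $1010$, $1110$, $10101$, $101010$. *)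

theory Defs
  imports Main
begin

text \<open>A partial Latin square of order n: P i j = None means cell (i,j) is empty.
  Rows, columns and symbols are indexed by {1..n}.\<close>
type_synonym pls = "nat \<Rightarrow> nat \<Rightarrow> nat option"

definition is_PLS :: "nat \<Rightarrow> pls \<Rightarrow> bool" where
  "is_PLS n P \<longleftrightarrow>
     (\<forall>i j. P i j \<noteq> None \<longrightarrow> i \<in> {1..n} \<and> j \<in> {1..n}) \<and>
     (\<forall>i j s. P i j = Some s \<longrightarrow> s \<in> {1..n}) \<and>
     (\<forall>i j j'. j \<noteq> j' \<longrightarrow> P i j \<noteq> None \<longrightarrow> P i j \<noteq> P i j') \<and>
     (\<forall>i i' j. i \<noteq> i' \<longrightarrow> P i j \<noteq> None \<longrightarrow> P i j \<noteq> P i' j)"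

definition PLS23 :: "nat \<Rightarrow> pls set" where
  "PLS23 n = {P. is_PLS n P \<and>
     (\<forall>i\<in>{1..n}. \<forall>j\<in>{1..n}. (P i j \<noteq> None \<longleftrightarrow> (i \<le> 2 \<or> j \<le> 3)))}"

text \<open>The (1,2)-row-permutation: sigma(P(1,i)) = P(2,i); identity outside {1..n}.\<close>
definition row_perm :: "nat \<Rightarrow> pls \<Rightarrow> nat \<Rightarrow> nat" where
  "row_perm n P x = (if x \<in> {1..n}
      then the (P 2 (THE i. i \<in> {1..n} \<and> P 1 i = Some x)) else x)"

definition is_cycle :: "(nat \<Rightarrow> nat) \<Rightarrow> nat list \<Rightarrow> bool" where
  "is_cycle \<sigma> xs \<longleftrightarrow> xs \<noteq> [] \<and> distinct xs \<and>
     (\<forall>i < length xs. \<sigma> (xs ! i) = xs ! ((i + 1) mod length xs))"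

definition first3 :: "pls \<Rightarrow> nat set" where
  "first3 P = {the (P 1 1), the (P 1 2), the (P 1 3)}"

definition cycle_type :: "pls \<Rightarrow> nat list \<Rightarrow> nat list" where
  "cycle_type P xs = map (\<lambda>a. if a \<in> first3 P then 1 else 0) xs"

definition seq_equiv :: "nat list \<Rightarrow> nat list \<Rightarrow> bool" where
  "seq_equiv s t \<longleftrightarrow> (\<exists>k. rotate k s = t)"

definition completely_reduced :: "nat \<Rightarrow> pls \<Rightarrow> bool" where
  "completely_reduced n P \<longleftrightarrow>
     (\<forall>xs. is_cycle (row_perm n P) xs \<and> set xs \<subseteq> {1..n} \<longrightarrow>
        (\<exists>t \<in> {[0,0],[0,1],[1,1],[1,0,1],[1,1,1],[1,0,1,0],[1,1,1,0],
                [1,0,1,0,1],[1,0,1,0,1,0]}. seq_equiv (cycle_type P xs) t))"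

definition has_adjacent_zeros :: "nat list \<Rightarrow> bool" where
  "has_adjacent_zeros t \<longleftrightarrow> (\<exists>i. Suc i < length t \<and> t ! i = 0 \<and> t ! Suc i = 0)"

end

theory Submission
  imports Defs
begin

definition LL :: "nat list list" where "LL = [[0,0],[0,1],[1,1],[1,0,1],[1,1,1],[1,0,1,0],[1,1,1,0],
                [1,0,1,0,1],[1,0,1,0,1,0]]"

definition okc :: "nat list \<Rightarrow> bool" where
 "okc ct = (length (filter (\<lambda>x. x=1) ct) \<le> 3 \<longrightarrow>
    list_all (\<lambda>i. ct!i = 0 \<longrightarrow> ct!((i+1) mod length ct) \<noteq> 0) [0..<length ct] \<longrightarrow>
    list_ex (\<lambda>t. list_ex (\<lambda>k. rotate k ct = t) [0..<length ct]) LL)"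

lemma e2: "list_all okc (List.n_lists 2 [0,1])" by code_simp
lemma e3: "list_all okc (List.n_lists 3 [0,1])" by code_simp
lemma e4: "list_all okc (List.n_lists 4 [0,1])" by code_simp
lemma e5: "list_all okc (List.n_lists 5 [0,1])" by code_simp
lemma e6: "list_all okc (List.n_lists 6 [0,1])" by code_simp

lemma enum:
  assumes "m \<in> {2..6}" "set ct \<subseteq> {0,1}" "length ct = m"
  shows "okc ct"
proof -
  have ct: "ct \<in> set (List.n_lists m [0,1])" using assms by (simp add: set_n_lists)
  have "m = 2 \<or> m = 3 \<or> m = 4 \<or> m = 5 \<or> m = 6" using assms(1) by auto
  then show ?thesis using ct e2 e3 e4 e5 e6 by (auto simp: list_all_iff)
qed

lemma e2': "list_all (\<lambda>ct. list_ex (\<lambda>t. list_ex (\<lambda>k. rotate k ct = t) [0..<length ct]) LL) (List.n_lists 2 [0,1])"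
  by code_simp

lemma no_fix:
  assumes "P \<in> PLS23 n" "x \<in> {1..n}" "2 \<le> n"
  shows "row_perm n P x \<noteq> x"
proof -
  have isP: "is_PLS n P" and fill: "\<forall>i\<in>{1..n}. \<forall>j\<in>{1..n}. (P i j \<noteq> None \<longleftrightarrow> (i \<le> 2 \<or> j \<le> 3))"
    using assms(1) unfolding PLS23_def by blast+
  have rng: "\<And>i j s. P i j = Some s \<Longrightarrow> s \<in> {1..n}"
    and rowd: "\<And>i j j'. j \<noteq> j' \<Longrightarrow> P i j \<noteq> None \<Longrightarrow> P i j \<noteq> P i j'"
    and cold: "\<And>i i' j. i \<noteq> i' \<Longrightarrow> P i j \<noteq> None \<Longrightarrow> P i j \<noteq> P i' j"
    using isP unfolding is_PLS_def by blast+
  have n1: "1 \<le> n" using assms(2) by auto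
  define g where "g j = the (P 1 j)" for j
  have some1: "P 1 j = Some (g j)" if "j \<in> {1..n}" for j
  proof -
    have "P 1 j \<noteq> None" using fill that n1 by auto
    then show ?thesis unfolding g_def by auto
  qed
  have some2: "\<exists>y. P 2 j = Some y" if "j \<in> {1..n}" for j
    using fill that assms(3) by auto
  have ginto: "g ` {1..n} \<subseteq> {1..n}"
    using rng some1 by blast
  have ginj: "inj_on g {1..n}"
  proof (rule inj_onI)
    fix a b assume ab: "a \<in> {1..n}" "b \<in> {1..n}" "g a = g b"
    show "a = b"
    proof (rule ccontr)
      assume "a \<noteq> b"
      then have "P 1 a \<noteq> P 1 b" using rowd[of a b 1] some1[OF ab(1)] by simp
      then show False using some1[OF ab(1)] some1[OF ab(2)] ab(3) by simp
    qed
  qed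
  have "g ` {1..n} = {1..n}" using endo_inj_surj[OF _ ginto ginj] by simp
  then have "x \<in> g ` {1..n}" using assms(2) by simp
  then obtain i where i1: "i \<in> {1..n}" and i2: "x = g i" by (rule imageE)
  note i = i1 i2[symmetric]
  have Pi: "P 1 i = Some x" using some1[OF i(1)] i(2) by simp
  have uniq: "(THE j. j \<in> {1..n} \<and> P 1 j = Some x) = i"
  proof (rule the_equality)
    show "i \<in> {1..n} \<and> P 1 i = Some x" using i Pi by simp
    fix j assume j: "j \<in> {1..n} \<and> P 1 j = Some x"
    show "j = i"
    proof (rule ccontr)
      assume "j \<noteq> i"
      then have "P 1 j \<noteq> P 1 i" using rowd[of j i 1] j by simp
      then show False using j Pi by simp
    qed
  qed
  obtain y where y: "P 2 i = Some y" using some2[OF i(1)] by blast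
  have "P 1 i \<noteq> P 2 i" using cold[of 1 2 i] Pi by simp
  then have "y \<noteq> x" using Pi y by simp
  then show ?thesis using assms(2) uniq y by (simp add: row_perm_def)
qed

theorem lemma4:
  fixes n :: nat and P :: pls
  assumes "n \<ge> 8" and "P \<in> PLS23 n" and "\<not> completely_reduced n P"
  shows "\<exists>xs. is_cycle (row_perm n P) xs \<and> set xs \<subseteq> {1..n} \<and> length xs \<ge> 3 \<and>
           (\<exists>t. seq_equiv (cycle_type P xs) t \<and> has_adjacent_zeros t)"
proof -
  have sLL: "set LL = {[0,0],[0,1],[1,1],[1,0,1],[1,1,1],[1,0,1,0],[1,1,1,0],
                [1,0,1,0,1],[1,0,1,0,1,0]}" by (simp add: LL_def)
  obtain xs where cyc: "is_cycle (row_perm n P) xs" and sub: "set xs \<subseteq> {1..n}"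
    and nl: "\<not> (\<exists>t \<in> set LL. seq_equiv (cycle_type P xs) t)"
    using assms(3) unfolding completely_reduced_def sLL by blast
  define ct where "ct = cycle_type P xs"
  define m where "m = length xs"
  have lct: "length ct = m" by (simp add: ct_def m_def cycle_type_def)
  have ne: "xs \<noteq> []" and dist: "distinct xs"
    and step: "\<forall>i < m. row_perm n P (xs ! i) = xs ! ((i + 1) mod m)"
    using cyc by (auto simp: is_cycle_def m_def)
  have setct: "set ct \<subseteq> {0,1}" by (auto simp: ct_def cycle_type_def)
  have nl': "\<not> list_ex (\<lambda>t. list_ex (\<lambda>k. rotate k ct = t) [0..<length ct]) LL"
  proof
    assume "list_ex (\<lambda>t. list_ex (\<lambda>k. rotate k ct = t) [0..<length ct]) LL"
    then obtain t k where "t \<in> set LL" "rotate k ct = t" by (auto simp: list_ex_iff)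
    then show False using nl unfolding seq_equiv_def ct_def by blast
  qed
  have m2: "m \<ge> 2"
  proof (rule ccontr)
    assume "\<not> m \<ge> 2"
    moreover have "m \<noteq> 0" using ne m_def by simp
    ultimately have "m = 1" by linarith
    then have "row_perm n P (xs ! 0) = xs ! 0" using step by simp
    moreover have "xs ! 0 \<in> {1..n}" using sub ne by (meson in_mono nth_mem length_greater_0_conv)
    ultimately show False using no_fix[OF assms(2)] assms(1) by auto
  qed
  have m3: "m \<ge> 3"
  proof (rule ccontr)
    assume "\<not> m \<ge> 3"
    then have "m = 2" using m2 by simp
    then have "ct \<in> set (List.n_lists 2 [0,1])" using setct lct by (simp add: set_n_lists)
    then show False using e2' nl' by (simp add: list_all_iff)
  qed
  show ?thesis
  proof (rule ccontr)
    assume contra: "\<not> ?thesis"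
    have cond: "ct ! ((i+1) mod m) \<noteq> 0" if "i < m" "ct ! i = 0" for i
    proof
      assume z: "ct ! ((i+1) mod m) = 0"
      have "has_adjacent_zeros (rotate i ct)"
        unfolding has_adjacent_zeros_def
        apply (rule exI[of _ 0])
        using that z m3 lct by (simp add: nth_rotate add.commute)
      moreover have "seq_equiv (cycle_type P xs) (rotate i ct)"
        unfolding seq_equiv_def ct_def by blast
      ultimately show False using contra cyc sub m3 m_def by blast
    qed
    define Z where "Z = {i. i < m \<and> ct ! i = 0}"
    define On where "On = {i. i < m \<and> ct ! i \<noteq> 0}"
    have ZO: "card Z + card On = m"
    proof -
      have "Z \<union> On = {..<m}" "Z \<inter> On = {}" by (auto simp: Z_def On_def)
      moreover have "finite Z" "finite On" by (auto simp: Z_def On_def)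
      ultimately show ?thesis using card_Un_disjoint[of Z On] by simp
    qed
    have inj: "inj_on (\<lambda>i. (i+1) mod m) Z"
    proof (rule inj_onI)
      fix a b assume "a \<in> Z" "b \<in> Z" "(a+1) mod m = (b+1) mod m"
      then have "a < m" "b < m" "(a+1) mod m = (b+1) mod m" by (auto simp: Z_def)
      moreover have "(x+1) mod m = (if x+1 = m then 0 else x+1)" if "x < m" for x
        using that by auto
      ultimately show "a = b" by (simp split: if_splits)
    qed
    have "(\<lambda>i. (i+1) mod m) ` Z \<subseteq> On" using cond m2 by (auto simp: Z_def On_def)
    then have ZleO: "card Z \<le> card On"
      using card_inj_on_le[OF inj] by (simp add: On_def)
    have Oeq: "On = {i. i < length xs \<and> xs ! i \<in> first3 P}"
      by (auto simp: On_def ct_def cycle_type_def m_def split: if_splits)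
    have cti: "ct ! i = (if xs ! i \<in> first3 P then 1 else 0)" if "i < m" for i
      using that by (simp add: ct_def cycle_type_def m_def)
    have "card On = card ((!) xs ` On)"
      using dist by (intro card_image[symmetric]) (auto simp: inj_on_def nth_eq_iff_index_eq Oeq)
    also have "\<dots> \<le> card (first3 P)"
    proof (rule card_mono)
      show "finite (first3 P)" by (simp add: first3_def)
      show "(!) xs ` On \<subseteq> first3 P" using Oeq by blast
    qed
    also have "\<dots> \<le> 3" by (simp add: first3_def card_insert_if)
    finally have O3: "card On \<le> 3" .
    have m6: "m \<le> 6" using ZO ZleO O3 by linarith
    have filt: "length (filter (\<lambda>x. x=1) ct) = card On"
      unfolding length_filter_conv_card On_def lct
      by (intro arg_cong[where f=card] Collect_cong) (auto simp: cti split: if_splits)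
    have "okc ct" using enum[of m ct] m2 m6 setct lct by simp
    moreover have "list_all (\<lambda>i. ct!i = 0 \<longrightarrow> ct!((i+1) mod length ct) \<noteq> 0) [0..<length ct]"
      using cond lct by (auto simp: list_all_iff)
    ultimately show False using nl' filt O3 by (simp add: okc_def)
  qed
qed

end
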